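(* Let $G$ be a $\lambda$-graph and $Q$ a query over $G$. Then $Q^{\#}$ is a sharing equivalence if and only if $[n]=[m]$ (equality of locally nameless terms) for all nodes $n,m$ with $n\,Q\,m$.
   Context: A pre-$\lambda$-graph is a directed graph whose nodes are of four kinds: an application node $@(n_1,n_2)$ has exactly two children, its left child $n_1$ and its right child $n_2$; an abstraction node $\lambda(n)$ has exactly one child, its body $n$; a free variable node has no children and carries an atom $\mathrm{id}(n)$ from a fixed set of atoms, distinct free variable nodes carrying distinct atoms; a bound variable node $\mathrm{var}(l)$ has exactly one outgoing binding edge, to an abstraction node $l$ (its binder). Letters $l,l'$ denote abstraction nodes. A trace is a finite sequence of directions from $\{\swarrow,\downarrow,\searrow\}$; $\epsilon$ is the empty trace and $d\cdot\tau$ is the trace $\tau$ extended by one final step $d$. Paths $n\xrightarrow{\tau}m$ are defined inductively: $n\xrightarrow{\epsilon}n$; if $n\xrightarrow{\tau}\lambda(m)$ then $n\xrightarrow{\downarrow\cdot\tau}m$; if $n\xrightarrow{\tau}@(m_1,m_2)$ then $n\xrightarrow{\swarrow\cdot\tau}m_1$ and $n\xrightarrow{\searrow\cdot\tau}m_2$ (binding edges are never followed). We write $n\xrightarrow{\tau}$ if $n\xrightarrow{\tau}m$ for some $m$. The path $n\xrightarrow{\tau}$ crosses a node $m$ if either $n\xrightarrow{\tau}m$, or $\tau=d\cdot\tau'$ and $n\xrightarrow{\tau'}$ crosses $m$. A root is a node $r$ such that the only path ending in $r$ has the empty trace. A node $m$ dominates $n$ if every path from a root to $n$ crosses $m$.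 A $\lambda$-graph is a pre-$\lambda$-graph that has finitely many nodes, is acyclic ($n\xrightarrow{\tau}n$ holds only for $\tau=\epsilon$), and is dominated (every bound variable node $\mathrm{var}(l)$ is dominated by its binder $l$). Two nodes are homogeneous if both are application nodes, or both abstraction nodes, or both free variable nodes, or both bound variable nodes; a binary relation $R$ on nodes is homogeneous if it only relates homogeneous nodes. Rules: $(\swarrow)$: $@(n_1,n_2)\,R\,@(m_1,m_2)$ implies $n_1\,R\,m_1$; $(\searrow)$: $@(n_1,n_2)\,R\,@(m_1,m_2)$ implies $n_2\,R\,m_2$; $(\downarrow)$: $\lambda(n)\,R\,\lambda(m)$ implies $n\,R\,m$; $(\circlearrowright)$: $\mathrm{var}(n)\,R\,\mathrm{var}(m)$ implies $n\,R\,m$. $R$ is propagated if closed under $(\swarrow),(\downarrow),(\searrow)$. $R$ is open if $n\,R\,m$ implies $n=m$ for all free variable nodes $n,m$. A blind bisimulation is a homogeneous propagated relation; a bisimulation is a blind bisimulation closed also under $(\circlearrowright)$. A blind sharing equivalence is a blind bisimulation that is an equivalence relation; a sharing equivalence is an open bisimulation that is an equivalence relation. $R^*$ denotes the reflexive–symmetric–transitive closure of $R$; $R^{\Downarrow}$ (propagation) is the smallest propagated relation containing $R$; $R^{\#}$ (spreading) is the smallest propagated equivalence relation containing $R$. A query over $G$ is a binary relation on the roots of $G$. Readback. Locally nameless terms: $t::=\underline{k}\mid \mathsf{x}\mid t\,s\mid \lambda.t$ with $k\in\mathbb N$ (bound variable as de Bruijn index) and $\mathsf{x}$ an atom (free variable);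 equality is syntactic. For a path $n\xrightarrow{\tau}$ crossing an abstraction node $l$, the index $\mathrm{idx}(l,n\xrightarrow{\tau})$ is defined by induction on the crossing: it is $0$ if $n\xrightarrow{\tau}l$; for $n\xrightarrow{d\cdot\tau}l'$ with $l'$ an abstraction node different from $l$ it is $\mathrm{idx}(l,n\xrightarrow{\tau})+1$; for $n\xrightarrow{d\cdot\tau}m$ with $m$ not an abstraction node it is $\mathrm{idx}(l,n\xrightarrow{\tau})$. For a root $r$ and a path $r\xrightarrow{\tau}n$, the readback $[r\xrightarrow{\tau}n]$ is: $\underline{\mathrm{idx}(l,r\xrightarrow{\tau})}$ if $n=\mathrm{var}(l)$ (well defined by domination); $\mathrm{id}(n)$ if $n$ is a free variable node; $\lambda.[r\xrightarrow{\downarrow\cdot\tau}m]$ if $n=\lambda(m)$; $[r\xrightarrow{\swarrow\cdot\tau}n_1]\,[r\xrightarrow{\searrow\cdot\tau}n_2]$ if $n=@(n_1,n_2)$. For a root $r$, $[r]:=[r\xrightarrow{\epsilon}r]$. *)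

theory Defs
  imports Main
begin

text \<open>Node kinds: App n1 n2 (application with left/right child), Abs n (abstraction with
body n), FVar x (free variable carrying atom x), BVar l (bound variable with binding edge
to l).\<close>

datatype ('n, 'a) kind = App 'n 'n | Abs 'n | FVar 'a | BVar 'n

type_synonym ('n, 'a) graph = "'n \<Rightarrow> ('n, 'a) kind"

datatype dir = DL | DD | DR  (* DL = swarrow, DD = downarrow, DR = searrow *)

text \<open>Traces: lists of directions; the trace d.tau (tau extended by a final step d) is
represented as d # tau, i.e. the head of the list is the LAST step.\<close>

definition is_abs :: "('n,'a) graph \<Rightarrow> 'n \<Rightarrow> bool" where
  "is_abs G n \<longleftrightarrow> (\<exists>b. G n = Abs b)"

definition pre_lambda_graph :: "('n,'a) graph \<Rightarrow> bool" where
  "pre_lambda_graph G \<longleftrightarrow>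
     (\<forall>n l. G n = BVar l \<longrightarrow> is_abs G l) \<and>
     (\<forall>n m x. G n = FVar x \<and> G m = FVar x \<longrightarrow> n = m)"

inductive path :: "('n,'a) graph \<Rightarrow> 'n \<Rightarrow> dir list \<Rightarrow> 'n \<Rightarrow> bool" for G where
  p_nil: "path G n [] n"
| p_abs: "path G n \<tau> m \<Longrightarrow> G m = Abs m' \<Longrightarrow> path G n (DD # \<tau>) m'"
| p_appl: "path G n \<tau> m \<Longrightarrow> G m = App m1 m2 \<Longrightarrow> path G n (DL # \<tau>) m1"
| p_appr: "path G n \<tau> m \<Longrightarrow> G m = App m1 m2 \<Longrightarrow> path G n (DR # \<tau>) m2"

definition has_path :: "('n,'a) graph \<Rightarrow> 'n \<Rightarrow> dir list \<Rightarrow> bool" where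
  "has_path G n \<tau> \<longleftrightarrow> (\<exists>m. path G n \<tau> m)"

fun crosses :: "('n,'a) graph \<Rightarrow> 'n \<Rightarrow> dir list \<Rightarrow> 'n \<Rightarrow> bool" where
  "crosses G n [] m \<longleftrightarrow> path G n [] m"
| "crosses G n (d # \<tau>) m \<longleftrightarrow> has_path G n (d # \<tau>) \<and> (path G n (d # \<tau>) m \<or> crosses G n \<tau> m)"

definition is_root :: "('n,'a) graph \<Rightarrow> 'n \<Rightarrow> bool" where
  "is_root G r \<longleftrightarrow> (\<forall>n \<tau>. path G n \<tau> r \<longrightarrow> \<tau> = [])"

definition dominates :: "('n,'a) graph \<Rightarrow> 'n \<Rightarrow> 'n \<Rightarrow> bool" where
  "dominates G m n \<longleftrightarrow> (\<forall>r \<tau>. is_root G r \<and> path G r \<tau> n \<longrightarrow> crosses G r \<tau> m)"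

text \<open>Lambda-graph: finitely many nodes (node type of class finite), acyclic, dominated.\<close>
definition lambda_graph :: "('n::finite,'a) graph \<Rightarrow> bool" where
  "lambda_graph G \<longleftrightarrow> pre_lambda_graph G \<and>
     (\<forall>n \<tau>. path G n \<tau> n \<longrightarrow> \<tau> = []) \<and>
     (\<forall>v l. G v = BVar l \<longrightarrow> dominates G l v)"

definition homogeneous_nodes :: "('n,'a) graph \<Rightarrow> 'n \<Rightarrow> 'n \<Rightarrow> bool" where
  "homogeneous_nodes G n m \<longleftrightarrow>
     (case (G n, G m) of
        (App _ _, App _ _) \<Rightarrow> True
      | (Abs _, Abs _) \<Rightarrow> True
      | (FVar _, FVar _) \<Rightarrow> True
      | (BVar _, BVar _) \<Rightarrow> True
      | _ \<Rightarrow> False)"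

definition homogeneous :: "('n,'a) graph \<Rightarrow> 'n rel \<Rightarrow> bool" where
  "homogeneous G R \<longleftrightarrow> (\<forall>(n,m)\<in>R. homogeneous_nodes G n m)"

definition propagated :: "('n,'a) graph \<Rightarrow> 'n rel \<Rightarrow> bool" where
  "propagated G R \<longleftrightarrow>
     (\<forall>n m n1 n2 m1 m2. (n,m) \<in> R \<and> G n = App n1 n2 \<and> G m = App m1 m2 \<longrightarrow> (n1,m1) \<in> R) \<and>
     (\<forall>n m n1 n2 m1 m2. (n,m) \<in> R \<and> G n = App n1 n2 \<and> G m = App m1 m2 \<longrightarrow> (n2,m2) \<in> R) \<and>
     (\<forall>n m n' m'. (n,m) \<in> R \<and> G n = Abs n' \<and> G m = Abs m' \<longrightarrow> (n',m') \<in> R)"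

definition closed_var :: "('n,'a) graph \<Rightarrow> 'n rel \<Rightarrow> bool" where
  "closed_var G R \<longleftrightarrow>
     (\<forall>n m l l'. (n,m) \<in> R \<and> G n = BVar l \<and> G m = BVar l' \<longrightarrow> (l,l') \<in> R)"

definition open_rel :: "('n,'a) graph \<Rightarrow> 'n rel \<Rightarrow> bool" where
  "open_rel G R \<longleftrightarrow>
     (\<forall>n m x y. (n,m) \<in> R \<and> G n = FVar x \<and> G m = FVar y \<longrightarrow> n = m)"

definition blind_bisimulation :: "('n,'a) graph \<Rightarrow> 'n rel \<Rightarrow> bool" where
  "blind_bisimulation G R \<longleftrightarrow> homogeneous G R \<and> propagated G R"

definition bisimulation :: "('n,'a) graph \<Rightarrow> 'n rel \<Rightarrow> bool" where
  "bisimulation G R \<longleftrightarrow> blind_bisimulation G R \<and> closed_var G R"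

definition sharing_equivalence :: "('n,'a) graph \<Rightarrow> 'n rel \<Rightarrow> bool" where
  "sharing_equivalence G R \<longleftrightarrow> open_rel G R \<and> bisimulation G R \<and> equiv UNIV R"

text \<open>Spreading R^#: the smallest propagated equivalence relation containing R.\<close>
definition spreading :: "('n,'a) graph \<Rightarrow> 'n rel \<Rightarrow> 'n rel" where
  "spreading G R = \<Inter>{S. R \<subseteq> S \<and> propagated G S \<and> equiv UNIV S}"

definition is_query :: "('n,'a) graph \<Rightarrow> 'n rel \<Rightarrow> bool" where
  "is_query G Q \<longleftrightarrow> (\<forall>(n,m)\<in>Q. is_root G n \<and> is_root G m)"

datatype 'a lnterm = BV nat | FV 'a | Ap "'a lnterm" "'a lnterm" | Lm "'a lnterm"

fun idx :: "('n,'a) graph \<Rightarrow> 'n \<Rightarrow> 'n \<Rightarrow> dir list \<Rightarrow> nat" where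
  "idx G l n [] = 0"
| "idx G l n (d # \<tau>) =
     (if path G n (d # \<tau>) l then 0
      else if (\<exists>k. path G n (d # \<tau>) k \<and> is_abs G k) then Suc (idx G l n \<tau>)
      else idx G l n \<tau>)"

text \<open>rb G r tau t means [r -tau-> n] = t (n the endpoint of the path).\<close>
inductive rb :: "('n,'a) graph \<Rightarrow> 'n \<Rightarrow> dir list \<Rightarrow> 'a lnterm \<Rightarrow> bool" for G where
  rb_bvar: "path G r \<tau> n \<Longrightarrow> G n = BVar l \<Longrightarrow> rb G r \<tau> (BV (idx G l r \<tau>))"
| rb_fvar: "path G r \<tau> n \<Longrightarrow> G n = FVar x \<Longrightarrow> rb G r \<tau> (FV x)"
| rb_abs: "path G r \<tau> n \<Longrightarrow> G n = Abs m \<Longrightarrow> rb G r (DD # \<tau>) t \<Longrightarrow> rb G r \<tau> (Lm t)"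
| rb_app: "path G r \<tau> n \<Longrightarrow> G n = App n1 n2 \<Longrightarrow> rb G r (DL # \<tau>) t \<Longrightarrow> rb G r (DR # \<tau>) s
           \<Longrightarrow> rb G r \<tau> (Ap t s)"

definition readback :: "('n,'a) graph \<Rightarrow> 'n \<Rightarrow> 'a lnterm" where
  "readback G r = (THE t. rb G r [] t)"

end

theory Submission
  imports Defs
begin

fun stp :: "('n,'a) graph \<Rightarrow> dir \<Rightarrow> 'n \<Rightarrow> 'n option" where
  "stp G DD m = (case G m of Abs b \<Rightarrow> Some b | _ \<Rightarrow> None)"
| "stp G DL m = (case G m of App a b \<Rightarrow> Some a | _ \<Rightarrow> None)"
| "stp G DR m = (case G m of App a b \<Rightarrow> Some b | _ \<Rightarrow> None)"

fun walk :: "('n,'a) graph \<Rightarrow> 'n \<Rightarrow> dir list \<Rightarrow> 'n option" where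
  "walk G n [] = Some n"
| "walk G n (d # \<tau>) = Option.bind (walk G n \<tau>) (stp G d)"

lemma path_walk1: "path G n \<tau> m \<Longrightarrow> walk G n \<tau> = Some m"
  by (induction rule: path.induct) auto

lemma path_walk2: "walk G n \<tau> = Some m \<Longrightarrow> path G n \<tau> m"
proof (induction \<tau> arbitrary: m)
  case Nil thus ?case by (auto intro: path.intros)
next
  case (Cons d \<tau>)
  then obtain k where k: "walk G n \<tau> = Some k" "stp G d k = Some m"
    by (cases "walk G n \<tau>") auto
  have p: "path G n \<tau> k" using Cons.IH k(1) .
  show ?case
    using k(2) p by (cases d; cases "G k") (auto intro: path.intros)
qed

lemma path_walk: "path G n \<tau> m \<longleftrightarrow> walk G n \<tau> = Some m"
  using path_walk1 path_walk2 by metis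

lemma walk_append: "walk G n (\<rho> @ \<sigma>) = Option.bind (walk G n \<sigma>) (\<lambda>x. walk G x \<rho>)"
  by (induction \<rho>) (auto split: option.splits)

lemma walk_prefix: "walk G n (\<rho> @ \<sigma>) \<noteq> None \<Longrightarrow> walk G n \<sigma> \<noteq> None"
  by (cases "walk G n \<sigma>") (auto simp: walk_append)

lemma walk_app2: "walk G n \<sigma> = Some x \<Longrightarrow> walk G n (\<rho> @ \<sigma>) = walk G x \<rho>"
  by (simp add: walk_append)

definition acyc :: "('n,'a) graph \<Rightarrow> bool" where
  "acyc G \<longleftrightarrow> (\<forall>n \<tau>. path G n \<tau> n \<longrightarrow> \<tau> = [])"

lemma acycD: "acyc G \<Longrightarrow> walk G n \<tau> = Some n \<Longrightarrow> \<tau> = []"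
  by (auto simp: acyc_def path_walk)

lemma LB:
  fixes G :: "('n::finite,'a) graph"
  assumes ac: "acyc G" and w: "walk G n \<tau> = Some m"
  shows "length \<tau> < card (UNIV::'n set)"
proof -
  have def: "walk G n (drop i \<tau>) \<noteq> None" for i
  proof -
    from w have "walk G n (take i \<tau> @ drop i \<tau>) \<noteq> None" by simp
    then show ?thesis by (rule walk_prefix)
  qed
  define f where "f i = the (walk G n (drop i \<tau>))" for i
  have ne: "f i \<noteq> f j" if ij: "i < j" "j \<le> length \<tau>" for i j
  proof
    assume eq: "f i = f j"
    obtain x where x: "walk G n (drop j \<tau>) = Some x" using def[of j] by auto
    define \<delta> where "\<delta> = take (j - i) (drop i \<tau>)"
    have d2: "drop (j-i) (drop i \<tau>) = drop j \<tau>" using ij by simp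
    have dec: "drop i \<tau> = \<delta> @ drop j \<tau>" unfolding \<delta>_def
      by (metis append_take_drop_id d2)
    have "walk G n (drop i \<tau>) = walk G x \<delta>" using dec x by (simp add: walk_append)
    moreover have "walk G n (drop i \<tau>) = Some x" using def[of i] eq x unfolding f_def by auto
    ultimately have "\<delta> = []" using acycD[OF ac] by metis
    moreover have "length \<delta> > 0" unfolding \<delta>_def using ij by simp
    ultimately show False by simp
  qed
  have "inj_on f {0..length \<tau>}"
  proof (rule inj_onI)
    fix i j assume "i \<in> {0..length \<tau>}" "j \<in> {0..length \<tau>}" "f i = f j"
    then show "i = j" using ne by (metis atLeastAtMost_iff linorder_neqE_nat)
  qed
  then have "card {0..length \<tau>} \<le> card (UNIV::'n set)"
    by (rule card_inj_on_le) auto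
  thus ?thesis by simp
qed

fun kk :: "('n,'a) kind \<Rightarrow> nat" where
  "kk (App _ _) = 0" | "kk (Abs _) = 1" | "kk (FVar _) = 2" | "kk (BVar _) = 3"

fun tk :: "'a lnterm \<Rightarrow> nat" where
  "tk (Ap _ _) = 0" | "tk (Lm _) = 1" | "tk (FV _) = 2" | "tk (BV _) = 3"

lemma hom_kk: "homogeneous_nodes G n m \<longleftrightarrow> kk (G n) = kk (G m)"
  by (auto simp: homogeneous_nodes_def split: kind.splits)

lemma hom_pair: "homogeneous G R \<Longrightarrow> (n,m)\<in>R \<Longrightarrow> kk (G n) = kk (G m)"
  by (auto simp: homogeneous_def hom_kk)

lemma is_abs_kk: "is_abs G x \<longleftrightarrow> kk (G x) = 1"
  by (cases "G x") (auto simp: is_abs_def)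

lemma RBC:
  assumes "rb G r \<tau> t" "walk G r \<tau> = Some n"
  shows "(case G n of BVar l \<Rightarrow> t = BV (idx G l r \<tau>) | FVar x \<Rightarrow> t = FV x
     | Abs b \<Rightarrow> (\<exists>t1. t = Lm t1 \<and> rb G r (DD#\<tau>) t1)
     | App a b \<Rightarrow> (\<exists>t1 t2. t = Ap t1 t2 \<and> rb G r (DL#\<tau>) t1 \<and> rb G r (DR#\<tau>) t2))"
  using assms by (cases rule: rb.cases) (auto simp: path_walk)

lemma KT: "rb G r \<tau> t \<Longrightarrow> walk G r \<tau> = Some n \<Longrightarrow> kk (G n) = tk t"
  using RBC[of G r \<tau> t n] by (cases "G n") auto

lemma rb_unique: "rb G r \<tau> t \<Longrightarrow> rb G r \<tau> t' \<Longrightarrow> t = t'"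
proof (induction arbitrary: t' rule: rb.induct)
  case (rb_bvar r \<tau> n l)
  have "t' = BV (idx G l r \<tau>)" using RBC[OF rb_bvar.prems path_walk1[OF rb_bvar.hyps(1)]] rb_bvar.hyps(2) by simp
  thus ?case by simp
next
  case (rb_fvar r \<tau> n x)
  have "t' = FV x" using RBC[OF rb_fvar.prems path_walk1[OF rb_fvar.hyps(1)]] rb_fvar.hyps(2) by simp
  thus ?case by simp
next
  case (rb_abs r \<tau> n m t)
  obtain t1 where "t' = Lm t1" "rb G r (DD#\<tau>) t1"
    using RBC[OF rb_abs.prems path_walk1[OF rb_abs.hyps(1)]] rb_abs.hyps(2) by auto
  thus ?case using rb_abs.IH by metis
next
  case (rb_app r \<tau> n n1 n2 t s)
  obtain t1 t2 where "t' = Ap t1 t2" "rb G r (DL#\<tau>) t1" "rb G r (DR#\<tau>) t2"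
    using RBC[OF rb_app.prems path_walk1[OF rb_app.hyps(1)]] rb_app.hyps(2) by auto
  thus ?case using rb_app.IH by metis
qed

lemma readback_eq: "rb G r [] t \<Longrightarrow> readback G r = t"
  unfolding readback_def
proof (rule the_equality)
  assume h: "rb G r [] t"
  show "rb G r [] t" by (rule h)
  fix x assume "rb G r [] x" thus "x = t" using rb_unique h by metis
qed

lemma rb_ex:
  fixes G :: "('n::finite,'a) graph"
  assumes ac: "acyc G"
  shows "walk G r \<tau> = Some n \<Longrightarrow> \<exists>t. rb G r \<tau> t"
proof (induction "card (UNIV::'n set) - length \<tau>" arbitrary: \<tau> n rule: less_induct)
  case less
  have lb: "length \<tau> < card (UNIV::'n set)" using LB[OF ac less.prems] .
  have p: "path G r \<tau> n" using less.prems by (simp add: path_walk)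
  show ?case
  proof (cases "G n")
    case (App a b)
    have wa: "walk G r (DL#\<tau>) = Some a" "walk G r (DR#\<tau>) = Some b" using less.prems App by auto
    have lt: "card (UNIV::'n set) - length (DL#\<tau>) < card (UNIV::'n set) - length \<tau>"
       "card (UNIV::'n set) - length (DR#\<tau>) < card (UNIV::'n set) - length \<tau>" using lb by auto
    obtain t1 where t1: "rb G r (DL#\<tau>) t1" using less.hyps[OF lt(1) wa(1)] by blast
    obtain t2 where t2: "rb G r (DR#\<tau>) t2" using less.hyps[OF lt(2) wa(2)] by blast
    show ?thesis using rb_app[OF p App t1 t2] by blast
  next
    case (Abs b)
    have wa: "walk G r (DD#\<tau>) = Some b" using less.prems Abs by auto
    have lt: "card (UNIV::'n set) - length (DD#\<tau>) < card (UNIV::'n set) - length \<tau>" using lb by auto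
    obtain t1 where t1: "rb G r (DD#\<tau>) t1" using less.hyps[OF lt wa] by blast
    show ?thesis using rb_abs[OF p Abs t1] by blast
  next
    case (FVar x) show ?thesis using rb_fvar[OF p FVar] by blast
  next
    case (BVar l) show ?thesis using rb_bvar[OF p BVar] by blast
  qed
qed

lemma crosses_split: "crosses G n \<tau> l \<Longrightarrow> \<exists>\<rho> \<sigma>. \<tau> = \<rho> @ \<sigma> \<and> walk G n \<sigma> = Some l"
proof (induction \<tau>)
  case Nil thus ?case by (intro exI[of _ "[]"]) (auto simp: path_walk)
next
  case (Cons d \<tau>)
  show ?case
  proof (cases "path G n (d#\<tau>) l")
    case True
    have "d#\<tau> = [] @ (d#\<tau>)" by simp
    moreover have "walk G n (d#\<tau>) = Some l" by (rule path_walk1[OF True])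
    ultimately show ?thesis by blast
  next
    case False
    have "crosses G n \<tau> l" using Cons.prems False by simp
    then obtain \<rho> \<sigma> where "\<tau> = \<rho> @ \<sigma>" "walk G n \<sigma> = Some l" using Cons.IH by blast
    hence "d#\<tau> = (d#\<rho>)@\<sigma> \<and> walk G n \<sigma> = Some l" by simp
    thus ?thesis by blast
  qed
qed

definition absat :: "('n,'a) graph \<Rightarrow> 'n \<Rightarrow> dir list \<Rightarrow> bool" where
  "absat G r \<sigma> = (case walk G r \<sigma> of Some x \<Rightarrow> is_abs G x | None \<Rightarrow> False)"

fun cnt :: "('n,'a) graph \<Rightarrow> 'n \<Rightarrow> dir list \<Rightarrow> dir list \<Rightarrow> nat" where
  "cnt G r [] \<sigma> = 0"
| "cnt G r (d#\<rho>) \<sigma> = (if absat G r (d#\<rho>@\<sigma>) then 1 else 0) + cnt G r \<rho> \<sigma>"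

lemma IDXCNT:
  assumes ac: "acyc G" and wl: "walk G r \<sigma> = Some l"
  shows "walk G r (\<rho>@\<sigma>) \<noteq> None \<Longrightarrow> idx G l r (\<rho>@\<sigma>) = cnt G r \<rho> \<sigma>"
proof (induction \<rho>)
  case Nil
  show ?case using wl by (cases \<sigma>) (auto simp: path_walk)
next
  case (Cons d \<rho>)
  have w1: "walk G r (\<rho>@\<sigma>) \<noteq> None" using Cons.prems walk_prefix[of G r "[d]" "\<rho>@\<sigma>"] by simp
  have np: "\<not> path G r (d#\<rho>@\<sigma>) l"
  proof
    assume "path G r (d#\<rho>@\<sigma>) l"
    then have "walk G l (d#\<rho>) = Some l" using walk_app2[OF wl, of "d#\<rho>"] by (simp add: path_walk)
    thus False using acycD[OF ac] by blast
  qed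
  have ab: "(\<exists>k. path G r (d # \<rho> @ \<sigma>) k \<and> is_abs G k) \<longleftrightarrow> absat G r (d#\<rho>@\<sigma>)"
    by (auto simp: absat_def path_walk split: option.splits)
  show ?case using np ab Cons.IH[OF w1] by simp
qed

definition agree :: "('n,'a) graph \<Rightarrow> 'n \<Rightarrow> 'n \<Rightarrow> dir list \<Rightarrow> bool" where
  "agree G r r' \<tau> \<longleftrightarrow> (\<forall>\<rho> \<sigma>. \<tau> = \<rho>@\<sigma> \<longrightarrow> absat G r \<sigma> = absat G r' \<sigma>)"

lemma agree_sym: "agree G r r' \<tau> \<Longrightarrow> agree G r' r \<tau>"
  by (auto simp: agree_def)

lemma cnt_eq: "agree G r r' (\<rho>@\<sigma>) \<Longrightarrow> cnt G r \<rho> \<sigma> = cnt G r' \<rho> \<sigma>"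
proof (induction \<rho>)
  case Nil thus ?case by simp
next
  case (Cons d \<rho>)
  have a1: "agree G r r' (\<rho>@\<sigma>)" using Cons.prems unfolding agree_def by (metis append_Cons)
  have e: "(d#\<rho>)@\<sigma> = [] @ (d#\<rho>@\<sigma>)" by simp
  have a2: "absat G r (d#\<rho>@\<sigma>) = absat G r' (d#\<rho>@\<sigma>)" using Cons.prems e unfolding agree_def
    by blast
  show ?case using a2 Cons.IH[OF a1] by simp
qed

lemma cnt_append: "cnt G r (\<rho>@\<delta>) \<sigma> = cnt G r \<rho> (\<delta>@\<sigma>) + cnt G r \<delta> \<sigma>"
  by (induction \<rho>) auto

lemma cnt_pos: "\<delta> \<noteq> [] \<Longrightarrow> absat G r (\<delta>@\<sigma>) \<Longrightarrow> cnt G r \<delta> \<sigma> \<ge> 1"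
  by (cases \<delta>) auto

lemma L1:
  assumes "\<tau> = \<rho>0@\<sigma>0" "\<tau> = \<rho>1@\<sigma>1" "\<sigma>1 = \<delta>@\<sigma>0" "\<delta> \<noteq> []" "absat G r \<sigma>1" "agree G r r' \<tau>"
  shows "cnt G r \<rho>0 \<sigma>0 > cnt G r' \<rho>1 \<sigma>1"
proof -
  have r0: "\<rho>0 = \<rho>1@\<delta>" using assms(1-3) by simp
  have "cnt G r \<rho>0 \<sigma>0 = cnt G r \<rho>1 \<sigma>1 + cnt G r \<delta> \<sigma>0" using r0 assms(3) cnt_append by metis
  moreover have "cnt G r \<delta> \<sigma>0 \<ge> 1" using cnt_pos assms(3-5) by metis
  moreover have "cnt G r \<rho>1 \<sigma>1 = cnt G r' \<rho>1 \<sigma>1" using cnt_eq assms(2,6) by metis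
  ultimately show ?thesis by simp
qed


lemma C1:
  assumes hom: "homogeneous G R" and pr: "propagated G R"
  shows "(a,b)\<in>R \<Longrightarrow> walk G a \<delta> = Some a' \<Longrightarrow> \<exists>b'. walk G b \<delta> = Some b' \<and> (a',b')\<in>R"
proof (induction \<delta> arbitrary: a')
  case Nil thus ?case by auto
next
  case (Cons d \<delta>)
  from Cons.prems(2) obtain x where x: "walk G a \<delta> = Some x" "stp G d x = Some a'"
    by (cases "walk G a \<delta>") auto
  from Cons.IH[OF Cons.prems(1) x(1)] obtain y where y: "walk G b \<delta> = Some y" "(x,y)\<in>R" by auto
  have hk: "kk (G x) = kk (G y)" using hom_pair[OF hom y(2)] .
  show ?case
  proof (cases d)
    case DD
    then obtain x' where gx: "G x = Abs x'" "a' = x'" using x(2) by (cases "G x") auto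
    then obtain y' where gy: "G y = Abs y'" using hk by (cases "G y") auto
    have "(x',y')\<in>R" using pr y(2) gx gy unfolding propagated_def by blast
    thus ?thesis using y(1) gy gx DD by auto
  next
    case DL
    then obtain x1 x2 where gx: "G x = App x1 x2" "a' = x1" using x(2) by (cases "G x") auto
    then obtain y1 y2 where gy: "G y = App y1 y2" using hk by (cases "G y") auto
    have "(x1,y1)\<in>R" using pr y(2) gx gy unfolding propagated_def by blast
    thus ?thesis using y(1) gy gx DL by auto
  next
    case DR
    then obtain x1 x2 where gx: "G x = App x1 x2" "a' = x2" using x(2) by (cases "G x") auto
    then obtain y1 y2 where gy: "G y = App y1 y2" using hk by (cases "G y") auto
    have "(x2,y2)\<in>R" using pr y(2) gx gy unfolding propagated_def by blast
    thus ?thesis using y(1) gy gx DR by auto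
  qed
qed

lemma len_concat_rep: "length (concat (replicate k \<delta>)) = k * length \<delta>"
  by (induction k) auto

lemma C:
  fixes G :: "('n::finite,'a) graph"
  assumes ac: "acyc G" and hom: "homogeneous G R" and pr: "propagated G R"
    and nm: "(n,m)\<in>R" and w: "walk G n \<delta> = Some m" and ne: "\<delta> \<noteq> []"
  shows False
proof -
  have it: "\<exists>a b. walk G n (concat (replicate k \<delta>)) = Some a \<and> walk G a \<delta> = Some b \<and> (a,b)\<in>R" for k
  proof (induction k)
    case 0 show ?case using nm w by auto
  next
    case (Suc k)
    then obtain a b where ab: "walk G n (concat (replicate k \<delta>)) = Some a" "walk G a \<delta> = Some b" "(a,b)\<in>R"
      by blast
    obtain b' where "walk G b \<delta> = Some b'" "(b,b')\<in>R" using C1[OF hom pr ab(3) ab(2)] by blast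
    moreover have "walk G n (concat (replicate (Suc k) \<delta>)) = Some b" using ab by (simp add: walk_append)
    ultimately show ?case by blast
  qed
  obtain a where "walk G n (concat (replicate (card (UNIV::'n set)) \<delta>)) = Some a" using it by blast
  from LB[OF ac this] have "card (UNIV::'n set) * length \<delta> < card (UNIV::'n set)"
    by (simp add: len_concat_rep)
  moreover have "length \<delta> \<ge> 1" using ne by (cases \<delta>) auto
  ultimately show False
    by (metis leD mult.right_neutral mult_le_mono2)
qed

lemma AGR:
  assumes hom: "homogeneous G R" and pr: "propagated G R" and sy: "sym R" and rr: "(r,r')\<in>R"
  shows "agree G r r' \<tau>"
  unfolding agree_def
proof (intro allI impI)
  fix \<rho> \<sigma>
  have rr': "(r',r)\<in>R" using sy rr by (rule symD)
  show "absat G r \<sigma> = absat G r' \<sigma>"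
  proof (cases "walk G r \<sigma>")
    case None
    have "walk G r' \<sigma> = None"
    proof (rule ccontr)
      assume "walk G r' \<sigma> \<noteq> None"
      then obtain y where "walk G r' \<sigma> = Some y" by auto
      from C1[OF hom pr rr' this] None show False by auto
    qed
    thus ?thesis using None by (simp add: absat_def)
  next
    case (Some x)
    from C1[OF hom pr rr Some] obtain y where y: "walk G r' \<sigma> = Some y" "(x,y)\<in>R" by blast
    have "kk (G x) = kk (G y)" using hom_pair[OF hom y(2)] .
    thus ?thesis using Some y(1) by (simp add: absat_def is_abs_kk)
  qed
qed

lemma suffix_cases: "\<rho>0@\<sigma>0 = \<rho>1@\<sigma>1 \<Longrightarrow>
   (\<exists>\<delta>. \<sigma>1 = \<delta>@\<sigma>0 \<and> \<rho>0 = \<rho>1@\<delta>) \<or> (\<exists>\<delta>. \<sigma>0 = \<delta>@\<sigma>1 \<and> \<rho>1 = \<rho>0@\<delta>)"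
  by (auto simp: append_eq_append_conv2)

lemma lg_facts:
  assumes "lambda_graph G"
  shows "acyc G" "pre_lambda_graph G" "\<And>v l. G v = BVar l \<Longrightarrow> dominates G l v"
  using assms by (auto simp: lambda_graph_def acyc_def)

lemma dom_split:
  assumes "lambda_graph G" "is_root G r" "walk G r \<tau> = Some v" "G v = BVar l"
  shows "\<exists>\<rho> \<sigma>. \<tau> = \<rho> @ \<sigma> \<and> walk G r \<sigma> = Some l"
proof -
  have "dominates G l v" using lg_facts(3)[OF assms(1,4)] .
  hence "crosses G r \<tau> l" using assms(2,3) by (auto simp: dominates_def path_walk)
  thus ?thesis by (rule crosses_split)
qed

lemma dirB:
  fixes G :: "('n::finite,'a) graph"
  assumes lg: "lambda_graph G" and se: "sharing_equivalence G R"
  shows "rb G r \<tau> t \<Longrightarrow> (r,r')\<in>R \<Longrightarrow> is_root G r \<Longrightarrow> is_root G r' \<Longrightarrow> rb G r' \<tau> t"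
proof -
  have ac: "acyc G" using lg_facts[OF lg] by blast
  have hom: "homogeneous G R" and pr: "propagated G R" and cv: "closed_var G R" and op: "open_rel G R"
    and eqv: "equiv UNIV R"
    using se by (auto simp: sharing_equivalence_def bisimulation_def blind_bisimulation_def)
  have sy: "sym R" and tr: "trans R" using eqv by (auto simp: equiv_def)
  show "rb G r \<tau> t \<Longrightarrow> (r,r')\<in>R \<Longrightarrow> is_root G r \<Longrightarrow> is_root G r' \<Longrightarrow> rb G r' \<tau> t"
  proof (induction rule: rb.induct)
    case (rb_bvar r \<tau> n l)
    have wn: "walk G r \<tau> = Some n" using rb_bvar.hyps(1) by (simp add: path_walk)
    obtain m where wm: "walk G r' \<tau> = Some m" and nm: "(n,m)\<in>R" using C1[OF hom pr rb_bvar.prems(1) wn] by blast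
    have "kk (G m) = 3" using hom_pair[OF hom nm] rb_bvar.hyps(2) by simp
    then obtain l' where gm: "G m = BVar l'" by (cases "G m") auto
    have ll: "(l,l')\<in>R" using cv nm rb_bvar.hyps(2) gm unfolding closed_var_def by blast
    obtain \<rho>0 \<sigma>0 where t0: "\<tau> = \<rho>0 @ \<sigma>0" and w0: "walk G r \<sigma>0 = Some l"
      using dom_split[OF lg rb_bvar.prems(2) wn rb_bvar.hyps(2)] by blast
    obtain \<rho>1 \<sigma>1 where t1: "\<tau> = \<rho>1 @ \<sigma>1" and w1: "walk G r' \<sigma>1 = Some l'"
      using dom_split[OF lg rb_bvar.prems(3) wm gm] by blast
    have s01: "\<sigma>0 = \<sigma>1"
    proof -
      from suffix_cases[of \<rho>0 \<sigma>0 \<rho>1 \<sigma>1] t0 t1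
      consider (a) \<delta> where "\<sigma>1 = \<delta>@\<sigma>0" | (b) \<delta> where "\<sigma>0 = \<delta>@\<sigma>1" by auto
      then show ?thesis
      proof cases
        case a
        show ?thesis
        proof (rule ccontr)
          assume "\<sigma>0 \<noteq> \<sigma>1"
          hence ne: "\<delta> \<noteq> []" using a by auto
          have "walk G r \<sigma>1 \<noteq> None" using wn t1 walk_prefix by (metis option.distinct(1))
          then obtain q where q: "walk G r \<sigma>1 = Some q" by auto
          have wq: "walk G l \<delta> = Some q" using q a walk_app2[OF w0, of \<delta>] by simp
          obtain q' where "walk G r' \<sigma>1 = Some q'" "(q,q')\<in>R" using C1[OF hom pr rb_bvar.prems(1) q] by blast
          hence "(q,l')\<in>R" using w1 by simp
          hence "(l,q)\<in>R" using ll sy tr by (meson symD transD)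
          thus False using C[OF ac hom pr _ wq ne] by blast
        qed
      next
        case b
        show ?thesis
        proof (rule ccontr)
          assume "\<sigma>0 \<noteq> \<sigma>1"
          hence ne: "\<delta> \<noteq> []" using b by auto
          obtain p where p: "walk G r' \<sigma>0 = Some p" "(l,p)\<in>R" using C1[OF hom pr rb_bvar.prems(1) w0] by blast
          have wp: "walk G l' \<delta> = Some p" using p(1) b walk_app2[OF w1, of \<delta>] by simp
          have "(l',p)\<in>R" using ll p(2) sy tr by (meson symD transD)
          thus False using C[OF ac hom pr _ wp ne] by blast
        qed
      qed
    qed
    have ag: "agree G r r' \<tau>" using AGR[OF hom pr sy rb_bvar.prems(1)] .
    have "idx G l r \<tau> = cnt G r \<rho>0 \<sigma>0" using IDXCNT[OF ac w0, of \<rho>0] t0 wn by simp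
    moreover have "idx G l' r' \<tau> = cnt G r' \<rho>0 \<sigma>0" using IDXCNT[OF ac, of r' \<sigma>0 l' \<rho>0] t0 s01 w1 wm by simp
    moreover have "cnt G r \<rho>0 \<sigma>0 = cnt G r' \<rho>0 \<sigma>0" using cnt_eq ag t0 by metis
    ultimately have "idx G l r \<tau> = idx G l' r' \<tau>" by simp
    thus ?case using rb.rb_bvar[OF path_walk2[OF wm] gm] by simp
  next
    case (rb_fvar r \<tau> n x)
    have wn: "walk G r \<tau> = Some n" using rb_fvar.hyps(1) by (simp add: path_walk)
    obtain m where wm: "walk G r' \<tau> = Some m" and nm: "(n,m)\<in>R" using C1[OF hom pr rb_fvar.prems(1) wn] by blast
    have "kk (G m) = 2" using hom_pair[OF hom nm] rb_fvar.hyps(2) by simp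
    then obtain y where gm: "G m = FVar y" by (cases "G m") auto
    have "n = m" using op nm rb_fvar.hyps(2) gm unfolding open_rel_def by blast
    hence "G m = FVar x" using rb_fvar.hyps(2) by simp
    thus ?case using rb.rb_fvar[OF path_walk2[OF wm]] by blast
  next
    case (rb_abs r \<tau> n b t)
    have wn: "walk G r \<tau> = Some n" using rb_abs.hyps(1) by (simp add: path_walk)
    obtain m where wm: "walk G r' \<tau> = Some m" and nm: "(n,m)\<in>R" using C1[OF hom pr rb_abs.prems(1) wn] by blast
    have "kk (G m) = 1" using hom_pair[OF hom nm] rb_abs.hyps(2) by simp
    then obtain b' where gm: "G m = Abs b'" by (cases "G m") auto
    have ih: "rb G r' (DD#\<tau>) t" using rb_abs.IH rb_abs.prems by blast
    show ?case using rb.rb_abs[OF path_walk2[OF wm] gm ih] .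
  next
    case (rb_app r \<tau> n n1 n2 t s)
    have wn: "walk G r \<tau> = Some n" using rb_app.hyps(1) by (simp add: path_walk)
    obtain m where wm: "walk G r' \<tau> = Some m" and nm: "(n,m)\<in>R" using C1[OF hom pr rb_app.prems(1) wn] by blast
    have "kk (G m) = 0" using hom_pair[OF hom nm] rb_app.hyps(2) by simp
    then obtain m1 m2 where gm: "G m = App m1 m2" by (cases "G m") auto
    have ih1: "rb G r' (DL#\<tau>) t" using rb_app.IH rb_app.prems by blast
    have ih2: "rb G r' (DR#\<tau>) s" using rb_app.IH rb_app.prems by blast
    show ?case using rb.rb_app[OF path_walk2[OF wm] gm ih1 ih2] .
  qed
qed


lemma AG: "rb G r [] t0 \<Longrightarrow> rb G r' [] t0 \<Longrightarrow> walk G r \<tau> = Some n \<Longrightarrow>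
   \<exists>m t. walk G r' \<tau> = Some m \<and> rb G r \<tau> t \<and> rb G r' \<tau> t"
proof (induction \<tau> arbitrary: n)
  case Nil thus ?case by auto
next
  case (Cons d \<tau>)
  from Cons.prems(3) obtain x where x: "walk G r \<tau> = Some x" "stp G d x = Some n"
    by (cases "walk G r \<tau>") auto
  from Cons.IH[OF Cons.prems(1,2) x(1)] obtain m t where
    mt: "walk G r' \<tau> = Some m" "rb G r \<tau> t" "rb G r' \<tau> t" by blast
  note R1 = RBC[OF mt(2) x(1)] and R2 = RBC[OF mt(3) mt(1)]
  show ?case
  proof (cases d)
    case DD
    then have gx: "G x = Abs n" using x(2) by (cases "G x") auto
    then obtain t1 where t1: "t = Lm t1" "rb G r (DD#\<tau>) t1" using R1 by auto
    then obtain b where "G m = Abs b" "rb G r' (DD#\<tau>) t1" using R2 by (cases "G m") auto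
    thus ?thesis using t1 mt(1) DD by auto
  next
    case DL
    then obtain n2 where gx: "G x = App n n2" using x(2) by (cases "G x") auto
    then obtain t1 t2 where t1: "t = Ap t1 t2" "rb G r (DL#\<tau>) t1" using R1 by auto
    then obtain b c where "G m = App b c" "rb G r' (DL#\<tau>) t1" using R2 by (cases "G m") auto
    thus ?thesis using t1 mt(1) DL by auto
  next
    case DR
    then obtain n1 where gx: "G x = App n1 n" using x(2) by (cases "G x") auto
    then obtain t1 t2 where t1: "t = Ap t1 t2" "rb G r (DR#\<tau>) t2" using R1 by auto
    then obtain b c where "G m = App b c" "rb G r' (DR#\<tau>) t2" using R2 by (cases "G m") auto
    thus ?thesis using t1 mt(1) DR by auto
  qed
qed

lemma AGP:
  assumes "rb G r [] t0" "rb G r' [] t0"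
  shows "agree G r r' \<tau>"
  unfolding agree_def
proof (intro allI impI)
  fix \<rho> \<sigma>
  show "absat G r \<sigma> = absat G r' \<sigma>"
  proof (cases "walk G r \<sigma>")
    case None
    have "walk G r' \<sigma> = None"
    proof (rule ccontr)
      assume "walk G r' \<sigma> \<noteq> None"
      then obtain y where "walk G r' \<sigma> = Some y" by auto
      from AG[OF assms(2,1) this] None show False by auto
    qed
    thus ?thesis using None by (simp add: absat_def)
  next
    case (Some x)
    from AG[OF assms Some] obtain y s where y: "walk G r' \<sigma> = Some y" "rb G r \<sigma> s" "rb G r' \<sigma> s" by blast
    have "kk (G x) = kk (G y)" using KT[OF y(2) Some] KT[OF y(3) y(1)] by simp
    thus ?thesis using Some y(1) by (simp add: absat_def is_abs_kk)
  qed
qed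

lemma SIGEQ:
  assumes ac: "acyc G" and wa: "walk G r \<sigma>0 = Some a" and aa: "is_abs G a"
    and wb: "walk G r' \<sigma>1 = Some b" and ab: "is_abs G b"
    and t0: "\<tau> = \<rho>0@\<sigma>0" and t1: "\<tau> = \<rho>1@\<sigma>1"
    and wr: "walk G r \<tau> \<noteq> None" and wr': "walk G r' \<tau> \<noteq> None"
    and ag: "agree G r r' \<tau>" and ie: "idx G a r \<tau> = idx G b r' \<tau>"
  shows "\<sigma>0 = \<sigma>1"
proof -
  have i0: "idx G a r \<tau> = cnt G r \<rho>0 \<sigma>0" using IDXCNT[OF ac wa, of \<rho>0] t0 wr by simp
  have i1: "idx G b r' \<tau> = cnt G r' \<rho>1 \<sigma>1" using IDXCNT[OF ac wb, of \<rho>1] t1 wr' by simp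
  from suffix_cases[of \<rho>0 \<sigma>0 \<rho>1 \<sigma>1] t0 t1
  consider (a) \<delta> where "\<sigma>1 = \<delta>@\<sigma>0" | (b) \<delta> where "\<sigma>0 = \<delta>@\<sigma>1" by auto
  then show ?thesis
  proof cases
    case a
    show ?thesis
    proof (rule ccontr)
      assume "\<sigma>0 \<noteq> \<sigma>1"
      hence ne: "\<delta> \<noteq> []" using a by auto
      have "absat G r' \<sigma>1" using wb ab by (simp add: absat_def)
      hence "absat G r \<sigma>1" using ag t1 unfolding agree_def by blast
      from L1[OF t0 t1 a ne this ag] i0 i1 ie show False by simp
    qed
  next
    case b
    show ?thesis
    proof (rule ccontr)
      assume "\<sigma>0 \<noteq> \<sigma>1"
      hence ne: "\<delta> \<noteq> []" using b by auto
      have "absat G r \<sigma>0" using wa aa by (simp add: absat_def)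
      hence "absat G r' \<sigma>0" using ag t0 unfolding agree_def by blast
      from L1[OF t1 t0 b ne this agree_sym[OF ag]] i0 i1 ie show False by simp
    qed
  qed
qed

definition Pset :: "('n,'a) graph \<Rightarrow> 'n rel \<Rightarrow> 'n rel" where
  "Pset G Q = {(n,m). \<exists>r r' \<tau>. (r,r')\<in>Q \<and> walk G r \<tau> = Some n \<and> walk G r' \<tau> = Some m}"

definition good :: "('n,'a) graph \<Rightarrow> 'n rel \<Rightarrow> bool" where
  "good G Q \<longleftrightarrow> (\<forall>r r'. (r,r')\<in>Q \<longrightarrow> (\<exists>t0. rb G r [] t0 \<and> rb G r' [] t0))"

lemma walk_rel:
  assumes pr: "propagated G S"
  shows "(r,r')\<in>S \<Longrightarrow> walk G r \<tau> = Some n \<Longrightarrow> walk G r' \<tau> = Some m \<Longrightarrow> (n,m)\<in>S"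
proof (induction \<tau> arbitrary: n m)
  case Nil thus ?case by auto
next
  case (Cons d \<tau>)
  from Cons.prems(2) obtain x where x: "walk G r \<tau> = Some x" "stp G d x = Some n"
    by (cases "walk G r \<tau>") auto
  from Cons.prems(3) obtain y where y: "walk G r' \<tau> = Some y" "stp G d y = Some m"
    by (cases "walk G r' \<tau>") auto
  have xy: "(x,y)\<in>S" using Cons.IH[OF Cons.prems(1) x(1) y(1)] .
  have P1: "\<And>n m n1 n2 m1 m2. (n,m) \<in> S \<Longrightarrow> G n = App n1 n2 \<Longrightarrow> G m = App m1 m2 \<Longrightarrow> (n1,m1) \<in> S"
   and P2: "\<And>n m n1 n2 m1 m2. (n,m) \<in> S \<Longrightarrow> G n = App n1 n2 \<Longrightarrow> G m = App m1 m2 \<Longrightarrow> (n2,m2) \<in> S"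
   and P3: "\<And>n m n' m'. (n,m) \<in> S \<Longrightarrow> G n = Abs n' \<Longrightarrow> G m = Abs m' \<Longrightarrow> (n',m') \<in> S"
    using pr unfolding propagated_def by blast+
  show ?case
  proof (cases d)
    case DD
    then obtain x' y' where "G x = Abs x'" "n = x'" "G y = Abs y'" "m = y'" using x(2) y(2)
      by (cases "G x"; cases "G y") auto
    thus ?thesis using P3[OF xy] by blast
  next
    case DL
    then obtain x1 x2 y1 y2 where "G x = App x1 x2" "n = x1" "G y = App y1 y2" "m = y1" using x(2) y(2)
      by (cases "G x"; cases "G y") auto
    thus ?thesis using P1[OF xy] by blast
  next
    case DR
    then obtain x1 x2 y1 y2 where "G x = App x1 x2" "n = x2" "G y = App y1 y2" "m = y2" using x(2) y(2)
      by (cases "G x"; cases "G y") auto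
    thus ?thesis using P2[OF xy] by blast
  qed
qed

context
  fixes G :: "('n::finite,'a) graph" and Q :: "'n rel"
  assumes lg: "lambda_graph G" and q: "is_query G Q" and gd: "good G Q"
begin

abbreviation "U \<equiv> Pset G Q \<union> (Pset G Q)\<inverse>"

lemma Pgood: "(n,m)\<in>Pset G Q \<Longrightarrow> \<exists>r r' \<tau> t t0. (r,r')\<in>Q \<and> walk G r \<tau> = Some n \<and> walk G r' \<tau> = Some m
   \<and> rb G r \<tau> t \<and> rb G r' \<tau> t \<and> rb G r [] t0 \<and> rb G r' [] t0"
proof -
  assume "(n,m)\<in>Pset G Q"
  then obtain r r' \<tau> where h: "(r,r')\<in>Q" "walk G r \<tau> = Some n" "walk G r' \<tau> = Some m"
    unfolding Pset_def by blast
  obtain t0 where t0: "rb G r [] t0" "rb G r' [] t0" using gd h(1) unfolding good_def by blast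
  from AG[OF t0 h(2)] h(3) obtain t where "rb G r \<tau> t" "rb G r' \<tau> t" by auto
  thus ?thesis using h t0 by blast
qed

lemma P_kind: "(n,m)\<in>Pset G Q \<Longrightarrow> kk (G n) = kk (G m)"
  using Pgood KT by metis

lemma U_kind: "(n,m)\<in>U \<Longrightarrow> kk (G n) = kk (G m)"
  using P_kind by auto

lemma P_App: "(n,m)\<in>Pset G Q \<Longrightarrow> G n = App n1 n2 \<Longrightarrow> G m = App m1 m2 \<Longrightarrow>
   (n1,m1)\<in>Pset G Q \<and> (n2,m2)\<in>Pset G Q"
proof -
  assume "(n,m)\<in>Pset G Q" "G n = App n1 n2" "G m = App m1 m2"
  then obtain r r' \<tau> where h: "(r,r')\<in>Q" "walk G r \<tau> = Some n" "walk G r' \<tau> = Some m"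
    and g: "G n = App n1 n2" "G m = App m1 m2" unfolding Pset_def by blast
  have "walk G r (DL#\<tau>) = Some n1" "walk G r' (DL#\<tau>) = Some m1"
       "walk G r (DR#\<tau>) = Some n2" "walk G r' (DR#\<tau>) = Some m2" using h g by auto
  thus ?thesis using h(1) unfolding Pset_def by blast
qed

lemma P_Abs: "(n,m)\<in>Pset G Q \<Longrightarrow> G n = Abs n1 \<Longrightarrow> G m = Abs m1 \<Longrightarrow> (n1,m1)\<in>Pset G Q"
proof -
  assume "(n,m)\<in>Pset G Q" "G n = Abs n1" "G m = Abs m1"
  then obtain r r' \<tau> where h: "(r,r')\<in>Q" "walk G r \<tau> = Some n" "walk G r' \<tau> = Some m"
    and g: "G n = Abs n1" "G m = Abs m1" unfolding Pset_def by blast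
  have "walk G r (DD#\<tau>) = Some n1" "walk G r' (DD#\<tau>) = Some m1" using h g by auto
  thus ?thesis using h(1) unfolding Pset_def by blast
qed

lemma U_App: "(n,m)\<in>U \<Longrightarrow> G n = App n1 n2 \<Longrightarrow> G m = App m1 m2 \<Longrightarrow> (n1,m1)\<in>U \<and> (n2,m2)\<in>U"
  using P_App by blast

lemma U_Abs: "(n,m)\<in>U \<Longrightarrow> G n = Abs n1 \<Longrightarrow> G m = Abs m1 \<Longrightarrow> (n1,m1)\<in>U"
  using P_Abs by blast

lemma P_open: "(n,m)\<in>Pset G Q \<Longrightarrow> G n = FVar x \<Longrightarrow> G m = FVar y \<Longrightarrow> n = m"
proof -
  assume a: "(n,m)\<in>Pset G Q" "G n = FVar x" "G m = FVar y"
  from Pgood[OF a(1)] obtain r r' \<tau> t where h: "walk G r \<tau> = Some n" "walk G r' \<tau> = Some m"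
    "rb G r \<tau> t" "rb G r' \<tau> t" by blast
  have "t = FV x" using RBC[OF h(3) h(1)] a(2) by simp
  moreover have "t = FV y" using RBC[OF h(4) h(2)] a(3) by simp
  ultimately have "x = y" by simp
  thus "n = m" using lg_facts(2)[OF lg] a(2,3) unfolding pre_lambda_graph_def by blast
qed

lemma U_open: "(n,m)\<in>U \<Longrightarrow> G n = FVar x \<Longrightarrow> G m = FVar y \<Longrightarrow> n = m"
  using P_open by (metis Un_iff converse_iff)

lemma P_var: "(n,m)\<in>Pset G Q \<Longrightarrow> G n = BVar a \<Longrightarrow> G m = BVar b \<Longrightarrow> (a,b)\<in>Pset G Q"
proof -
  assume as: "(n,m)\<in>Pset G Q" "G n = BVar a" "G m = BVar b"
  from Pgood[OF as(1)] obtain r r' \<tau> t t0 where h: "(r,r')\<in>Q" "walk G r \<tau> = Some n" "walk G r' \<tau> = Some m"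
    "rb G r \<tau> t" "rb G r' \<tau> t" "rb G r [] t0" "rb G r' [] t0" by blast
  have ac: "acyc G" using lg_facts[OF lg] by blast
  have "t = BV (idx G a r \<tau>)" using RBC[OF h(4) h(2)] as(2) by simp
  moreover have "t = BV (idx G b r' \<tau>)" using RBC[OF h(5) h(3)] as(3) by simp
  ultimately have ie: "idx G a r \<tau> = idx G b r' \<tau>" by simp
  have rt: "is_root G r" "is_root G r'" using q h(1) unfolding is_query_def by auto
  obtain \<rho>0 \<sigma>0 where t0: "\<tau> = \<rho>0 @ \<sigma>0" and w0: "walk G r \<sigma>0 = Some a"
    using dom_split[OF lg rt(1) h(2) as(2)] by blast
  obtain \<rho>1 \<sigma>1 where t1: "\<tau> = \<rho>1 @ \<sigma>1" and w1: "walk G r' \<sigma>1 = Some b"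
    using dom_split[OF lg rt(2) h(3) as(3)] by blast
  have aa: "is_abs G a" "is_abs G b" using lg_facts(2)[OF lg] as(2,3) unfolding pre_lambda_graph_def by blast+
  have "\<sigma>0 = \<sigma>1" using SIGEQ[OF ac w0 aa(1) w1 aa(2) t0 t1 _ _ AGP[OF h(6,7)] ie] h(2,3) by simp
  thus ?thesis using h(1) w0 w1 unfolding Pset_def by blast
qed

lemma U_var: "(n,m)\<in>U \<Longrightarrow> G n = BVar a \<Longrightarrow> G m = BVar b \<Longrightarrow> (a,b)\<in>U"
  using P_var by blast

lemma E_kind: "(n,m)\<in>U\<^sup>* \<Longrightarrow> kk (G n) = kk (G m)"
proof (induction rule: rtrancl_induct)
  case base thus ?case by simp
next
  case (step y z) thus ?case using U_kind[OF step.hyps(2)] by simp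
qed

lemma E_App:
  assumes "(n,m)\<in>U\<^sup>*"
  shows "\<forall>n1 n2 m1 m2. G n = App n1 n2 \<longrightarrow> G m = App m1 m2 \<longrightarrow> (n1,m1)\<in>U\<^sup>* \<and> (n2,m2)\<in>U\<^sup>*"
  using assms
proof (induction rule: rtrancl_induct)
  case base thus ?case by auto
next
  case (step y z)
  show ?case
  proof (intro allI impI)
    fix n1 n2 z1 z2 assume g: "G n = App n1 n2" "G z = App z1 z2"
    have "kk (G y) = 0" using E_kind[OF step.hyps(1)] g(1) by simp
    then obtain y1 y2 where gy: "G y = App y1 y2" by (cases "G y") auto
    have "(n1,y1)\<in>U\<^sup>*" "(n2,y2)\<in>U\<^sup>*" using step.IH g(1) gy by auto
    moreover have "(y1,z1)\<in>U" "(y2,z2)\<in>U" using U_App[OF step.hyps(2) gy g(2)] by auto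
    ultimately show "(n1,z1)\<in>U\<^sup>* \<and> (n2,z2)\<in>U\<^sup>*" by (meson rtrancl_into_rtrancl)
  qed
qed

lemma E_Abs:
  assumes "(n,m)\<in>U\<^sup>*"
  shows "\<forall>n1 m1. G n = Abs n1 \<longrightarrow> G m = Abs m1 \<longrightarrow> (n1,m1)\<in>U\<^sup>*"
  using assms
proof (induction rule: rtrancl_induct)
  case base thus ?case by auto
next
  case (step y z)
  show ?case
  proof (intro allI impI)
    fix n1 z1 assume g: "G n = Abs n1" "G z = Abs z1"
    have "kk (G y) = 1" using E_kind[OF step.hyps(1)] g(1) by simp
    then obtain y1 where gy: "G y = Abs y1" by (cases "G y") auto
    have "(n1,y1)\<in>U\<^sup>*" using step.IH g(1) gy by auto
    moreover have "(y1,z1)\<in>U" using U_Abs[OF step.hyps(2) gy g(2)] by auto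
    ultimately show "(n1,z1)\<in>U\<^sup>*" by (meson rtrancl_into_rtrancl)
  qed
qed

lemma E_open:
  assumes "(n,m)\<in>U\<^sup>*"
  shows "\<forall>x y. G n = FVar x \<longrightarrow> G m = FVar y \<longrightarrow> n = m"
  using assms
proof (induction rule: rtrancl_induct)
  case base thus ?case by auto
next
  case (step y z)
  show ?case
  proof (intro allI impI)
    fix x w assume g: "G n = FVar x" "G z = FVar w"
    have "kk (G y) = 2" using E_kind[OF step.hyps(1)] g(1) by simp
    then obtain v where gy: "G y = FVar v" by (cases "G y") auto
    have "n = y" using step.IH g(1) gy by auto
    moreover have "y = z" using U_open[OF step.hyps(2) gy g(2)] .
    ultimately show "n = z" by simp
  qed
qed

lemma E_var:
  assumes "(n,m)\<in>U\<^sup>*"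
  shows "\<forall>a b. G n = BVar a \<longrightarrow> G m = BVar b \<longrightarrow> (a,b)\<in>U\<^sup>*"
  using assms
proof (induction rule: rtrancl_induct)
  case base thus ?case by auto
next
  case (step y z)
  show ?case
  proof (intro allI impI)
    fix a b assume g: "G n = BVar a" "G z = BVar b"
    have "kk (G y) = 3" using E_kind[OF step.hyps(1)] g(1) by simp
    then obtain c where gy: "G y = BVar c" by (cases "G y") auto
    have "(a,c)\<in>U\<^sup>*" using step.IH g(1) gy by auto
    moreover have "(c,b)\<in>U" using U_var[OF step.hyps(2) gy g(2)] .
    ultimately show "(a,b)\<in>U\<^sup>*" by (meson rtrancl_into_rtrancl)
  qed
qed

lemma E_equiv: "equiv UNIV (U\<^sup>*)"
  unfolding equiv_def by (simp add: refl_rtrancl trans_rtrancl sym_rtrancl[OF sym_Un_converse])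

lemma E_prop: "propagated G (U\<^sup>*)"
  unfolding propagated_def using E_App E_Abs by blast

lemma Q_sub: "Q \<subseteq> U\<^sup>*"
proof
  fix p assume "p \<in> Q"
  then obtain r r' where p: "p = (r,r')" "(r,r')\<in>Q" by (cases p) auto
  have "walk G r [] = Some r" "walk G r' [] = Some r'" by simp_all
  hence "(r,r')\<in>Pset G Q" unfolding Pset_def using p(2) by blast
  thus "p \<in> U\<^sup>*" using p(1) by auto
qed

lemma spread_eq: "spreading G Q = U\<^sup>*"
proof
  show "spreading G Q \<subseteq> U\<^sup>*" unfolding spreading_def using Q_sub E_prop E_equiv by blast
next
  show "U\<^sup>* \<subseteq> spreading G Q" unfolding spreading_def
  proof (rule Inter_greatest)
    fix S assume "S \<in> {S. Q \<subseteq> S \<and> propagated G S \<and> equiv UNIV S}"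
    hence S: "Q \<subseteq> S" "propagated G S" "equiv UNIV S" by auto
    have sy: "sym S" and tr: "trans S" and rf: "\<And>x. (x,x)\<in>S" using S(3)
      by (auto simp: equiv_def refl_on_def)
    have PS: "Pset G Q \<subseteq> S" unfolding Pset_def using walk_rel[OF S(2)] S(1) by blast
    have US: "U \<subseteq> S" using PS sy by (auto dest: symD)
    show "U\<^sup>* \<subseteq> S"
    proof
      fix p assume "p \<in> U\<^sup>*"
      then obtain a b where p: "p = (a,b)" "(a,b)\<in>U\<^sup>*" by (cases p) auto
      from p(2) have "(a,b)\<in>S"
        by (induction rule: rtrancl_induct) (use rf US tr in \<open>auto dest: transD\<close>)
      thus "p \<in> S" using p(1) by simp
    qed
  qed
qed

lemma dirA: "sharing_equivalence G (spreading G Q)"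
  unfolding spread_eq sharing_equivalence_def bisimulation_def blind_bisimulation_def
proof (intro conjI)
  show "open_rel G (U\<^sup>*)" unfolding open_rel_def using E_open by blast
  show "homogeneous G (U\<^sup>*)" unfolding homogeneous_def using E_kind by (auto simp: hom_kk)
  show "propagated G (U\<^sup>*)" by (rule E_prop)
  show "closed_var G (U\<^sup>*)" unfolding closed_var_def using E_var by blast
  show "equiv UNIV (U\<^sup>*)" by (rule E_equiv)
qed

end

theorem mainTheorem3:
  fixes G :: "('n::finite, 'a) graph" and Q :: "'n rel"
  assumes "lambda_graph G" and "is_query G Q"
  shows "sharing_equivalence G (spreading G Q) \<longleftrightarrow>
         (\<forall>n m. (n, m) \<in> Q \<longrightarrow> readback G n = readback G m)"
proof
  assume se: "sharing_equivalence G (spreading G Q)"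
  show "\<forall>n m. (n, m) \<in> Q \<longrightarrow> readback G n = readback G m"
  proof (intro allI impI)
    fix n m assume nm: "(n,m)\<in>Q"
    have ac: "acyc G" using lg_facts[OF assms(1)] by blast
    obtain t where t: "rb G n [] t" using rb_ex[OF ac, of n "[]" n] by auto
    have rt: "is_root G n" "is_root G m" using assms(2) nm unfolding is_query_def by auto
    have "(n,m) \<in> spreading G Q" using nm unfolding spreading_def by blast
    hence "rb G m [] t" using dirB[OF assms(1) se t _ rt] by blast
    thus "readback G n = readback G m" using readback_eq t by metis
  qed
next
  assume h: "\<forall>n m. (n, m) \<in> Q \<longrightarrow> readback G n = readback G m"
  have ac: "acyc G" using lg_facts[OF assms(1)] by blast
  have gd: "good G Q" unfolding good_def
  proof (intro allI impI)
    fix r r' assume rr: "(r,r')\<in>Q"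
    obtain t where t: "rb G r [] t" using rb_ex[OF ac, of r "[]" r] by auto
    obtain t' where t': "rb G r' [] t'" using rb_ex[OF ac, of r' "[]" r'] by auto
    have "t = t'" using h rr readback_eq[OF t] readback_eq[OF t'] by metis
    thus "\<exists>t0. rb G r [] t0 \<and> rb G r' [] t0" using t t' by blast
  qed
  show "sharing_equivalence G (spreading G Q)" by (rule dirA[OF assms gd])
qed

end
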